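(* Let $G$ be a graph, $O\subseteq V(G)$, $r$ and $m$ non-negative integers, and $\prec$ a linear ordering of $V(G)$. Let $O'$ be the set of all $(r,\prec,m,O)$-rich vertices of $G$. If the weak $r$-coloring number of $(G,\prec)$ is at most $b$, then $|O'|\le \frac{b}{m}|O|$.
   Context: For a linear ordering $\prec$ of $V(G)$ and a non-negative integer $r$, a vertex $u$ is weakly $(r,\prec)$-reachable from a vertex $v\succeq u$ if there is a path $P$ in $G$ from $v$ to $u$ of length at most $r$ such that all vertices of $V(P)\setminus\{u\}$ are greater than $u$ in $\prec$. $L_{r,\prec}(v)$ is the set of vertices weakly $(r,\prec)$-reachable from $v$, and $R_{r,\prec}(u)$ is the set of vertices $v$ from which $u$ is weakly $(r,\prec)$-reachable. The weak $r$-coloring number of $(G,\prec)$ is $\max_{v\in V(G)}|L_{r,\prec}(v)|$. For $O\subseteq V(G)$ and a non-negative integer $m$, a vertex $v$ is $(r,\prec,m,O)$-rich if $|R_{r,\prec}(v)\cap O|\ge m$. *)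

theory Defs
  imports Complex_Main
begin

definition graph :: "'a set \<Rightarrow> ('a \<Rightarrow> 'a \<Rightarrow> bool) \<Rightarrow> bool" where
  "graph V E \<longleftrightarrow> finite V \<and> (\<forall>x y. E x y \<longrightarrow> x \<in> V \<and> y \<in> V) \<and>
     (\<forall>x y. E x y \<longrightarrow> E y x) \<and> (\<forall>x. \<not> E x x)"

text \<open>A path given as its vertex list (distinct vertices, consecutive ones adjacent).
  Its length is the number of edges, i.e. length P - 1.\<close>
definition is_path :: "'a set \<Rightarrow> ('a \<Rightarrow> 'a \<Rightarrow> bool) \<Rightarrow> 'a list \<Rightarrow> bool" where
  "is_path V E P \<longleftrightarrow> P \<noteq> [] \<and> distinct P \<and> set P \<subseteq> V \<and>
     (\<forall>i. Suc i < length P \<longrightarrow> E (P ! i) (P ! Suc i))"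

text \<open>Strict order induced by a linear order relation R (pairs (x,y) meaning x \<preceq> y).\<close>
definition less_ord :: "('a \<times> 'a) set \<Rightarrow> 'a \<Rightarrow> 'a \<Rightarrow> bool" where
  "less_ord R x y \<longleftrightarrow> (x, y) \<in> R \<and> x \<noteq> y"

text \<open>u is weakly (r,R)-reachable from v (v \<succeq> u).\<close>
definition weakly_reachable ::
  "'a set \<Rightarrow> ('a \<Rightarrow> 'a \<Rightarrow> bool) \<Rightarrow> ('a \<times> 'a) set \<Rightarrow> nat \<Rightarrow> 'a \<Rightarrow> 'a \<Rightarrow> bool" where
  "weakly_reachable V E R r v u \<longleftrightarrow> u \<in> V \<and> v \<in> V \<and> (u, v) \<in> R \<and>
     (\<exists>P. is_path V E P \<and> hd P = v \<and> last P = u \<and> length P - 1 \<le> r \<and>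
          (\<forall>x \<in> set P - {u}. less_ord R u x))"

definition L_set :: "'a set \<Rightarrow> ('a \<Rightarrow> 'a \<Rightarrow> bool) \<Rightarrow> ('a \<times> 'a) set \<Rightarrow> nat \<Rightarrow> 'a \<Rightarrow> 'a set" where
  "L_set V E R r v = {u. weakly_reachable V E R r v u}"

definition R_set :: "'a set \<Rightarrow> ('a \<Rightarrow> 'a \<Rightarrow> bool) \<Rightarrow> ('a \<times> 'a) set \<Rightarrow> nat \<Rightarrow> 'a \<Rightarrow> 'a set" where
  "R_set V E R r u = {v. weakly_reachable V E R r v u}"

definition wcol :: "'a set \<Rightarrow> ('a \<Rightarrow> 'a \<Rightarrow> bool) \<Rightarrow> ('a \<times> 'a) set \<Rightarrow> nat \<Rightarrow> nat" where
  "wcol V E R r = Max ((\<lambda>v. card (L_set V E R r v)) ` V)"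

definition rich :: "'a set \<Rightarrow> ('a \<Rightarrow> 'a \<Rightarrow> bool) \<Rightarrow> ('a \<times> 'a) set \<Rightarrow> nat \<Rightarrow> nat \<Rightarrow> 'a set \<Rightarrow> 'a \<Rightarrow> bool" where
  "rich V E R r m Ob v \<longleftrightarrow> card (R_set V E R r v \<inter> Ob) \<ge> m"

end

theory Submission
  imports Defs
begin

lemma card_count: "finite A \<Longrightarrow> card {x\<in>A. P x} = (\<Sum>x\<in>A. if P x then 1 else (0::nat))"
  by (simp add: sum.If_cases Int_def conj_commute)

theorem mainTheorem3:
  fixes V :: "'a set" and E :: "'a \<Rightarrow> 'a \<Rightarrow> bool" and R :: "('a \<times> 'a) set"
    and Ob :: "'a set" and r m b :: nat
  assumes "graph V E"
    and "linear_order_on V R"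
    and "Ob \<subseteq> V"
    and "m > 0"
    and "wcol V E R r \<le> b"
  shows "real (card {v \<in> V. rich V E R r m Ob v}) \<le> (real b / real m) * real (card Ob)"
proof -
  let ?O = "{v \<in> V. rich V E R r m Ob v}"
  let ?w = "weakly_reachable V E R r"
  have fV: "finite V" using assms(1) unfolding graph_def by blast
  have fO: "finite ?O" using fV by simp
  have fOb: "finite Ob" using fV assms(3) finite_subset by blast
  have "m * card ?O = (\<Sum>v\<in>?O. m)" by simp
  also have "\<dots> \<le> (\<Sum>v\<in>?O. card {u\<in>Ob. ?w u v})"
  proof (rule sum_mono)
    fix v assume "v \<in> ?O"
    then have "m \<le> card (R_set V E R r v \<inter> Ob)" unfolding rich_def by simp
    moreover have "R_set V E R r v \<inter> Ob = {u\<in>Ob. ?w u v}" unfolding R_set_def by auto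
    ultimately show "m \<le> card {u\<in>Ob. ?w u v}" by simp
  qed
  also have "\<dots> = (\<Sum>v\<in>?O. \<Sum>u\<in>Ob. if ?w u v then 1 else 0)"
    using fOb by (simp add: card_count)
  also have "\<dots> = (\<Sum>u\<in>Ob. \<Sum>v\<in>?O. if ?w u v then 1 else 0)"
    by (rule sum.swap)
  also have "\<dots> = (\<Sum>u\<in>Ob. card {v\<in>?O. ?w u v})"
    using card_count[OF fO, of "?w u" for u] by simp
  also have "\<dots> \<le> (\<Sum>u\<in>Ob. b)"
  proof (rule sum_mono)
    fix u assume u: "u \<in> Ob"
    have sub: "{v\<in>?O. ?w u v} \<subseteq> L_set V E R r u" unfolding L_set_def by auto
    have fL: "finite (L_set V E R r u)" using fV unfolding L_set_def weakly_reachable_def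
      by (auto intro: finite_subset)
    have "card {v\<in>?O. ?w u v} \<le> card (L_set V E R r u)" using sub fL by (rule card_mono[rotated])
    also have "\<dots> \<le> wcol V E R r" unfolding wcol_def using fV u assms(3) by (auto intro: Max_ge)
    finally show "card {v\<in>?O. ?w u v} \<le> b" using assms(5) by simp
  qed
  also have "\<dots> = b * card Ob" by simp
  finally have key: "m * card ?O \<le> b * card Ob" .
  hence "real m * real (card ?O) \<le> real b * real (card Ob)" by (metis of_nat_le_iff of_nat_mult)
  thus ?thesis using assms(4) by (simp add: field_simps)
qed

end
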